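(* In the setting below, suppose that $$\sum_{t\in\mathcal K}\hat d_t^\top Z^\top f(x_t)\le \sum_{t\in\mathcal K^c}\|Z^\top f(x_t)\|_2\quad\text{for all } Z\in\mathbb{R}^{m\times n}.$$ Then $\bar A$ is the unique global minimizer of $\min_{A\in\mathbb{R}^{n\times m}}\sum_{t=0}^{T-1}\|(\bar A-A)f(x_t)+\bar d_t\|_2$ if and only if for every nonzero $Z\in\mathbb{R}^{m\times n}$, $$\sum_{t\in\mathcal K}\hat d_t^\top Z^\top f(x_t)=\sum_{t\in\mathcal K^c}\|Z^\top f(x_t)\|_2\ \Longrightarrow\ \sum_{t\in\mathcal K}\big|\hat d_t^\top Z^\top f(x_t)\big|<\sum_{t\in\mathcal K}\|Z^\top f(x_t)\|_2 .$$
   Context: $f:\mathbb{R}^n\to\mathbb{R}^m$ is given, $\bar A\in\mathbb{R}^{n\times m}$, $\bar d_0,\dots,\bar d_{T-1}\in\mathbb{R}^n$, and $x_0=0_n$, $x_{t+1}=\bar A f(x_t)+\bar d_t$ for $t=0,\dots,T-1$. $\mathcal K:=\{t\in\{0,\dots,T-1\}:\bar d_t\ne 0\}$, $\mathcal K^c:=\{0,\dots,T-1\}\setminus\mathcal K$, $\hat d_t:=\bar d_t/\|\bar d_t\|_2$ for $t\in\mathcal K$. *)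

theory Defs
  imports "HOL-Analysis.Analysis"
begin

text \<open>Trajectory: x_0 = 0, x_(t+1) = Abar f(x_t) + d_t.
 Vectors in R^n are real^'n, R^m are real^'m; an n x m matrix is real^'m^'n.\<close>
fun traj :: "(real^'n \<Rightarrow> real^'m) \<Rightarrow> real^'m^'n \<Rightarrow> (nat \<Rightarrow> real^'n) \<Rightarrow> nat \<Rightarrow> real^'n" where
  "traj f Abar d 0 = 0"
| "traj f Abar d (Suc t) = Abar *v f (traj f Abar d t) + d t"

definition Kset :: "(nat \<Rightarrow> real^'n) \<Rightarrow> nat \<Rightarrow> nat set" where
  "Kset d T = {t. t < T \<and> d t \<noteq> 0}"

definition Kcset :: "(nat \<Rightarrow> real^'n) \<Rightarrow> nat \<Rightarrow> nat set" where
  "Kcset d T = {t. t < T \<and> d t = 0}"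

definition dhat :: "(nat \<Rightarrow> real^'n) \<Rightarrow> nat \<Rightarrow> real^'n" where
  "dhat d t = (1 / norm (d t)) *\<^sub>R d t"

definition objective :: "(real^'n \<Rightarrow> real^'m) \<Rightarrow> real^'m^'n \<Rightarrow> (nat \<Rightarrow> real^'n) \<Rightarrow> nat
    \<Rightarrow> real^'m^'n \<Rightarrow> real" where
  "objective f Abar d T A = (\<Sum>t<T. norm ((Abar - A) *v f (traj f Abar d t) + d t))"

definition unique_global_minimizer :: "('a \<Rightarrow> real) \<Rightarrow> 'a \<Rightarrow> bool" where
  "unique_global_minimizer g a \<longleftrightarrow> (\<forall>b. g a \<le> g b) \<and> (\<forall>b. (\<forall>c. g b \<le> g c) \<longrightarrow> b = a)"

end

theory Submission
  imports Defs
begin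

lemma L1: fixes d v :: "'a::real_inner" assumes "d \<noteq> 0"
  shows "norm d + ((1/norm d) *\<^sub>R d) \<bullet> v \<le> norm (d + v)"
proof -
  have n1: "norm ((1/norm d) *\<^sub>R d) = 1" using assms by simp
  have "((1/norm d) *\<^sub>R d) \<bullet> (d + v) \<le> norm (d+v)"
    using norm_cauchy_schwarz[of "(1/norm d) *\<^sub>R d" "d+v"] n1 by simp
  moreover have "((1/norm d) *\<^sub>R d) \<bullet> d = norm d" using assms
    by (simp add: dot_square_norm power2_eq_square)
  ultimately show ?thesis by (simp add: inner_add_right)
qed

lemma L2: fixes d u :: "'a::real_inner" assumes "d \<noteq> 0"
  and "norm (d - u) \<le> norm d - ((1/norm d) *\<^sub>R d) \<bullet> u"
  shows "\<bar>((1/norm d) *\<^sub>R d) \<bullet> u\<bar> = norm u"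
proof -
  define e where "e = (1/norm d) *\<^sub>R d"
  have n1: "norm e = 1" using assms unfolding e_def by simp
  have ed: "e \<bullet> d = norm d" using assms unfolding e_def
    by (simp add: dot_square_norm power2_eq_square)
  have "e \<bullet> (d - u) \<le> norm (d - u)" using norm_cauchy_schwarz[of e "d-u"] n1 by simp
  hence "e \<bullet> (d - u) = norm e * norm (d - u)" using assms(2) ed n1
    unfolding e_def[symmetric] by (simp add: inner_diff_right)
  hence "norm e *\<^sub>R (d - u) = norm (d - u) *\<^sub>R e" using norm_cauchy_schwarz_eq by blast
  hence "d - u = norm (d - u) *\<^sub>R e" using n1 by simp
  hence u: "u = (norm d - norm (d - u)) *\<^sub>R e"
    using assms(1) unfolding e_def by (simp add: algebra_simps)
  have "e \<bullet> u = norm d - norm (d - u)" by (subst u) (simp add: n1 dot_square_norm)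
  moreover have "norm u = \<bar>norm d - norm (d - u)\<bar>" by (subst u) (simp add: n1)
  ultimately show ?thesis unfolding e_def by simp
qed

lemma L3: fixes d u :: "'a::real_inner" assumes "d \<noteq> 0"
  and "\<bar>((1/norm d) *\<^sub>R d) \<bullet> u\<bar> = norm u"
  and "s * (((1/norm d) *\<^sub>R d) \<bullet> u) \<le> norm d"
  shows "norm (d - s *\<^sub>R u) = norm d - s * (((1/norm d) *\<^sub>R d) \<bullet> u)"
proof -
  define e where "e = (1/norm d) *\<^sub>R d"
  have n1: "norm e = 1" using assms unfolding e_def by simp
  have de: "d = norm d *\<^sub>R e" using assms(1) unfolding e_def by simp
  have "u = norm u *\<^sub>R e \<or> u = - norm u *\<^sub>R e"
    using norm_cauchy_schwarz_abs_eq[of e u] assms(2) n1 unfolding e_def[symmetric] by simp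
  hence u: "u = (e \<bullet> u) *\<^sub>R e"
  proof
    assume h: "u = norm u *\<^sub>R e"
    have "e \<bullet> u = norm u" by (subst h) (simp add: n1 dot_square_norm)
    thus ?thesis using h by simp
  next
    assume h: "u = - norm u *\<^sub>R e"
    have "e \<bullet> u = - norm u" by (subst h) (simp add: n1 dot_square_norm)
    thus ?thesis using h by simp
  qed
  have "s *\<^sub>R u = (s * (e \<bullet> u)) *\<^sub>R e" using u by (metis scaleR_scaleR)
  hence "d - s *\<^sub>R u = (norm d - s * (e \<bullet> u)) *\<^sub>R e"
    using de by (metis scaleR_left_diff_distrib)
  hence "norm (d - s *\<^sub>R u) = \<bar>norm d - s * (e \<bullet> u)\<bar>" by (simp add: n1)
  thus ?thesis using assms(3) unfolding e_def by simp
qed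

lemma tz: "transpose (0::real^'a^'b) = 0" by (simp add: transpose_def vec_eq_iff)

lemma obj_split:
  fixes f :: "real^'n \<Rightarrow> real^'m" and Abar :: "real^'m^'n"
    and d :: "nat \<Rightarrow> real^'n" and T :: nat
  shows "objective f Abar d T A =
    (\<Sum>t\<in>Kset d T. norm ((Abar - A) *v f (traj f Abar d t) + d t))
    + (\<Sum>t\<in>Kcset d T. norm ((Abar - A) *v f (traj f Abar d t)))"
proof -
  have u: "{..<T} = Kset d T \<union> Kcset d T" unfolding Kset_def Kcset_def by auto
  have fin: "finite (Kset d T)" "finite (Kcset d T)" unfolding Kset_def Kcset_def by auto
  have dj: "Kset d T \<inter> Kcset d T = {}" unfolding Kset_def Kcset_def by auto
  have "objective f Abar d T A = (\<Sum>t\<in>Kset d T. norm ((Abar - A) *v f (traj f Abar d t) + d t))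
    + (\<Sum>t\<in>Kcset d T. norm ((Abar - A) *v f (traj f Abar d t) + d t))"
    unfolding objective_def u by (rule sum.union_disjoint[OF fin dj])
  moreover have "(\<Sum>t\<in>Kcset d T. norm ((Abar - A) *v f (traj f Abar d t) + d t))
     = (\<Sum>t\<in>Kcset d T. norm ((Abar - A) *v f (traj f Abar d t)))"
    by (rule sum.cong) (auto simp: Kcset_def)
  ultimately show ?thesis by simp
qed

theorem theorem2:
  fixes f :: "real^'n \<Rightarrow> real^'m" and Abar :: "real^'m^'n"
    and d :: "nat \<Rightarrow> real^'n" and T :: nat
  assumes hyp: "\<forall>Z :: real^'n^'m.
      (\<Sum>t\<in>Kset d T. dhat d t \<bullet> (transpose Z *v f (traj f Abar d t)))
        \<le> (\<Sum>t\<in>Kcset d T. norm (transpose Z *v f (traj f Abar d t)))"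
  shows "unique_global_minimizer (objective f Abar d T) Abar \<longleftrightarrow>
    (\<forall>Z :: real^'n^'m. Z \<noteq> 0 \<longrightarrow>
      (\<Sum>t\<in>Kset d T. dhat d t \<bullet> (transpose Z *v f (traj f Abar d t)))
        = (\<Sum>t\<in>Kcset d T. norm (transpose Z *v f (traj f Abar d t)))
      \<longrightarrow> (\<Sum>t\<in>Kset d T. \<bar>dhat d t \<bullet> (transpose Z *v f (traj f Abar d t))\<bar>)
        < (\<Sum>t\<in>Kset d T. norm (transpose Z *v f (traj f Abar d t))))"
proof -
  define y where "y t = f (traj f Abar d t)" for t
  define K where "K = Kset d T"
  define Kc where "Kc = Kcset d T"
  define g where "g = objective f Abar d T"
  have finK: "finite K" "finite Kc" unfolding K_def Kc_def Kset_def Kcset_def by auto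
  have dK: "t \<in> K \<Longrightarrow> d t \<noteq> 0" for t unfolding K_def Kset_def by auto
  have dh: "dhat d t = (1/norm (d t)) *\<^sub>R d t" for t by (simp add: dhat_def)
  have gsplit: "g (Abar - B) = (\<Sum>t\<in>K. norm (d t - transpose Z *v y t))
      + (\<Sum>t\<in>Kc. norm (transpose Z *v y t))" if "Z = - transpose B" for B Z
  proof -
    have "transpose Z *v y t = - (B *v y t)" for t
      using that by (simp add: transpose_def matrix_vector_mult_def vec_eq_iff sum_negf)
    thus ?thesis unfolding g_def obj_split[of f Abar d T] K_def Kc_def y_def
      by (simp add: algebra_simps)
  qed
  have g0: "g Abar = (\<Sum>t\<in>K. norm (d t))"
    using gsplit[of 0 0] by (simp add: tz)
  have hypK: "(\<Sum>t\<in>K. dhat d t \<bullet> (transpose Z *v y t)) \<le> (\<Sum>t\<in>Kc. norm (transpose Z *v y t))" for Z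
    using hyp unfolding K_def Kc_def y_def by blast
  have L1': "norm (d t) - dhat d t \<bullet> (transpose Z *v y t) \<le> norm (d t - transpose Z *v y t)"
    if "t \<in> K" for t Z
    using L1[OF dK[OF that], of "- (transpose Z *v y t)"] unfolding dh by simp
  have gmin: "g Abar \<le> g A" for A
  proof -
    define Z where "Z = - transpose (Abar - A)"
    have "g Abar = (\<Sum>t\<in>K. norm (d t) - dhat d t \<bullet> (transpose Z *v y t))
         + (\<Sum>t\<in>K. dhat d t \<bullet> (transpose Z *v y t))"
      by (simp add: g0 sum_subtractf)
    also have "\<dots> \<le> (\<Sum>t\<in>K. norm (d t - transpose Z *v y t)) + (\<Sum>t\<in>Kc. norm (transpose Z *v y t))"
      by (intro add_mono sum_mono L1' hypK)
    also have "\<dots> = g A" using gsplit[of Z "Abar - A"] Z_def by simp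
    finally show ?thesis .
  qed
  have csabs: "\<bar>dhat d t \<bullet> u\<bar> \<le> norm u" if "t \<in> K" for t u
    using Cauchy_Schwarz_ineq2[of "dhat d t" u] dK[OF that] unfolding dh by simp
  show ?thesis
  proof
    assume U: "unique_global_minimizer (objective f Abar d T) Abar"
    show "\<forall>Z :: real^'n^'m. Z \<noteq> 0 \<longrightarrow>
      (\<Sum>t\<in>Kset d T. dhat d t \<bullet> (transpose Z *v f (traj f Abar d t)))
        = (\<Sum>t\<in>Kcset d T. norm (transpose Z *v f (traj f Abar d t)))
      \<longrightarrow> (\<Sum>t\<in>Kset d T. \<bar>dhat d t \<bullet> (transpose Z *v f (traj f Abar d t))\<bar>)
        < (\<Sum>t\<in>Kset d T. norm (transpose Z *v f (traj f Abar d t)))"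
    proof (intro allI impI, rule ccontr)
      fix Z :: "real^'n^'m"
      assume Z0: "Z \<noteq> 0"
      assume eq0: "(\<Sum>t\<in>Kset d T. dhat d t \<bullet> (transpose Z *v f (traj f Abar d t)))
        = (\<Sum>t\<in>Kcset d T. norm (transpose Z *v f (traj f Abar d t)))"
      assume nlt0: "\<not> (\<Sum>t\<in>Kset d T. \<bar>dhat d t \<bullet> (transpose Z *v f (traj f Abar d t))\<bar>)
        < (\<Sum>t\<in>Kset d T. norm (transpose Z *v f (traj f Abar d t)))"
      define u where "u t = transpose Z *v y t" for t
      define c where "c t = dhat d t \<bullet> u t" for t
      have eq: "(\<Sum>t\<in>K. c t) = (\<Sum>t\<in>Kc. norm (u t))"
        using eq0 unfolding c_def u_def y_def K_def Kc_def .
      have nlt: "\<not> (\<Sum>t\<in>K. \<bar>c t\<bar>) < (\<Sum>t\<in>K. norm (u t))"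
        using nlt0 unfolding c_def u_def y_def K_def .
      have each: "\<bar>c t\<bar> = norm (u t)" if "t \<in> K" for t
      proof (rule ccontr)
        assume "\<bar>c t\<bar> \<noteq> norm (u t)"
        hence "\<bar>c t\<bar> < norm (u t)" using csabs[OF that, of "u t"] unfolding c_def by linarith
        hence "(\<Sum>t\<in>K. \<bar>c t\<bar>) < (\<Sum>t\<in>K. norm (u t))"
          using sum_strict_mono_ex1[OF finK(1), of "\<lambda>t. \<bar>c t\<bar>" "\<lambda>t. norm (u t)"]
            csabs that unfolding c_def by blast
        thus False using nlt by simp
      qed
      define m where "m = Min (insert 1 ((\<lambda>t. norm (d t)) ` K))"
      have mpos: "m > 0" unfolding m_def using finK dK by (subst Min_gr_iff) auto
      have mle: "m \<le> norm (d t)" if "t \<in> K" for t unfolding m_def using finK that by (intro Min_le) auto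
      define S where "S = (\<Sum>t\<in>K. \<bar>c t\<bar>)"
      have S0: "S \<ge> 0" unfolding S_def by (simp add: sum_nonneg)
      define s where "s = m / (1 + S)"
      have spos: "s > 0" unfolding s_def using mpos S0 by simp
      have sc: "s * c t \<le> norm (d t)" if "t \<in> K" for t
      proof -
        have "\<bar>c t\<bar> \<le> S" unfolding S_def using finK(1) that by (intro member_le_sum) auto
        hence "s * c t \<le> s * S" using spos by (intro mult_left_mono) auto
        also have "s * S \<le> m" unfolding s_def using mpos S0 by (simp add: field_simps)
        finally show ?thesis using mle[OF that] by simp
      qed
      define A where "A = Abar + s *\<^sub>R transpose Z"
      have "g A = (\<Sum>t\<in>K. norm (d t - transpose (s *\<^sub>R Z) *v y t))
         + (\<Sum>t\<in>Kc. norm (transpose (s *\<^sub>R Z) *v y t))"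
      proof -
        have e1: "A = Abar - (- (s *\<^sub>R transpose Z))" unfolding A_def by simp
        have e2: "s *\<^sub>R Z = - transpose (- (s *\<^sub>R transpose Z))"
          by (simp add: transpose_def vec_eq_iff)
        show ?thesis unfolding e1 by (rule gsplit[OF e2])
      qed
      also have "\<dots> = (\<Sum>t\<in>K. norm (d t - s *\<^sub>R u t)) + (\<Sum>t\<in>Kc. s * norm (u t))"
      proof -
        have "transpose (s *\<^sub>R Z) *v y t = s *\<^sub>R u t" for t
          unfolding u_def transpose_scalar by (rule scaleR_matrix_vector_assoc[symmetric])
        thus ?thesis using spos by simp
      qed
      also have "(\<Sum>t\<in>K. norm (d t - s *\<^sub>R u t)) = (\<Sum>t\<in>K. norm (d t) - s * c t)"
      proof (rule sum.cong)
        fix t assume t: "t \<in> K"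
        show "norm (d t - s *\<^sub>R u t) = norm (d t) - s * c t"
          using L3[OF dK[OF t], of "u t" s] each[OF t] sc[OF t] unfolding c_def dh by simp
      qed simp
      also have "\<dots> + (\<Sum>t\<in>Kc. s * norm (u t)) = g Abar"
        using eq by (simp add: g0 sum_subtractf sum_distrib_left[symmetric])
      finally have gA: "g A = g Abar" .
      have "\<forall>c. g A \<le> g c" using gA gmin by simp
      hence "A = Abar" using U unfolding unique_global_minimizer_def g_def by blast
      hence "s *\<^sub>R transpose Z = 0" unfolding A_def by simp
      hence "transpose Z = 0" using spos by simp
      hence "Z = 0" by (metis transpose_transpose tz)
      thus False using Z0 by simp
    qed
  next
    assume C: "\<forall>Z :: real^'n^'m. Z \<noteq> 0 \<longrightarrow>
      (\<Sum>t\<in>Kset d T. dhat d t \<bullet> (transpose Z *v f (traj f Abar d t)))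
        = (\<Sum>t\<in>Kcset d T. norm (transpose Z *v f (traj f Abar d t)))
      \<longrightarrow> (\<Sum>t\<in>Kset d T. \<bar>dhat d t \<bullet> (transpose Z *v f (traj f Abar d t))\<bar>)
        < (\<Sum>t\<in>Kset d T. norm (transpose Z *v f (traj f Abar d t)))"
    show "unique_global_minimizer (objective f Abar d T) Abar"
      unfolding unique_global_minimizer_def g_def[symmetric]
    proof (intro conjI allI impI)
      fix b show "g Abar \<le> g b" by (rule gmin)
    next
      fix b assume bmin: "\<forall>c. g b \<le> g c"
      define Z where "Z = - transpose (Abar - b)"
      define u where "u t = transpose Z *v y t" for t
      have gb: "g b = (\<Sum>t\<in>K. norm (d t - u t)) + (\<Sum>t\<in>Kc. norm (u t))"
        using gsplit[of Z "Abar - b"] Z_def u_def by simp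
      have geq: "g b = g Abar" using bmin gmin[of b] by (metis order_antisym)
      define a where "a t = norm (d t - u t) - (norm (d t) - dhat d t \<bullet> u t)" for t
      have a0: "\<forall>t\<in>K. a t \<ge> 0" using L1' unfolding a_def u_def by simp
      have h0: "(\<Sum>t\<in>Kc. norm (u t)) - (\<Sum>t\<in>K. dhat d t \<bullet> u t) \<ge> 0"
        using hypK[of Z] unfolding u_def by simp
      have "(\<Sum>t\<in>K. a t) + ((\<Sum>t\<in>Kc. norm (u t)) - (\<Sum>t\<in>K. dhat d t \<bullet> u t)) = g b - g Abar"
        unfolding gb g0 a_def by (simp add: sum_subtractf sum.distrib)
      hence tot: "(\<Sum>t\<in>K. a t) + ((\<Sum>t\<in>Kc. norm (u t)) - (\<Sum>t\<in>K. dhat d t \<bullet> u t)) = 0"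
        using geq by simp
      have sa: "(\<Sum>t\<in>K. a t) \<ge> 0" using a0 by (simp add: sum_nonneg)
      have s1: "(\<Sum>t\<in>K. a t) = 0" and s2: "(\<Sum>t\<in>K. dhat d t \<bullet> u t) = (\<Sum>t\<in>Kc. norm (u t))"
        using tot sa h0 by linarith+
      have at: "a t = 0" if "t \<in> K" for t using s1 sum_nonneg_eq_0_iff[OF finK(1)] a0 that by blast
      have abs: "\<bar>dhat d t \<bullet> u t\<bar> = norm (u t)" if t: "t \<in> K" for t
        using L2[OF dK[OF t], of "u t"] at[OF t] unfolding a_def dh by simp
      show "b = Abar"
      proof (rule ccontr)
        assume "b \<noteq> Abar"
        hence "Z \<noteq> 0" unfolding Z_def by (metis transpose_transpose tz neg_0_equal_iff_equal right_minus_eq)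
        hence "(\<Sum>t\<in>K. \<bar>dhat d t \<bullet> u t\<bar>) < (\<Sum>t\<in>K. norm (u t))"
          using C s2 unfolding u_def y_def K_def Kc_def by blast
        thus False using abs by simp
      qed
    qed
  qed
qed

end
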